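(* Let $\mathcal O$ be a phylogenetic quiver and let $A$ be a regular vertex of $\mathcal O$. Then the clade $\mathcal O_A$ is a phylogenetic quiver.
   Context: A quiver consists of a class of vertices and, for each ordered pair of vertices $(A,B)$, a set of edges $A\to B$ (loops and multiple edges allowed). An evolution of length $m\ge 0$ is a sequence $A_0\leftarrow A_1\leftarrow\cdots\leftarrow A_m$ of vertices together with edges $A_k\to A_{k-1}$ ($1\le k\le m$); $A_0$ is its initial and $A_m$ its terminal vertex. Write $A\le B$ ($A$ is an ancestor of $B$, $B$ a descendant of $A$) if there is an evolution with initial vertex $A$ and terminal vertex $B$; $A,B$ are isotypic ($A\sim B$) if $A\le B$ and $B\le A$. A vertex $A$ is primitive if every ancestor of $A$ is isotypic to $A$. A full evolution for $X$ is an evolution with primitive initial vertex and terminal vertex $X$. The height $h(X)$ is the smallest length of a full evolution for $X$ ($h(X)=\infty$ if none exists). An evolution $\alpha=(A_0\leftarrow\cdots\leftarrow A_m)$ embeds in $\beta=(B_0\leftarrow\cdots\leftarrow B_n)$ if $m\le n$ and there are integers $0\le r_0<r_1<\cdots<r_m\le n$ with $A_k\sim B_{r_k}$ for all $k$. A universal evolution for $X$ is a full evolution for $X$ that embeds in every full evolution for $X$; $X$ is phylogenetic if it has a universal evolution. A quiver is monotonous if $h(A)\ge h(B)$ for every edge $A\to B$; it is small if the isotypy classes of its vertices form a set; it is phylogenetic if it is small, monotonous, and all its vertices are phylogenetic. The clade $\mathcal O_A$ of a vertex $A$ is the quiver formed by all descendants of $A$ in $\mathcal O$ and all edges of $\mathcal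 O$ between them; heights, primitivity etc. in $\mathcal O_A$ are computed within $\mathcal O_A$. A vertex $A$ is regular if for every $B$ in $\mathcal O_A$ with $h(B)=h(A)$ there is an edge $B\to A$ in $\mathcal O$. *)

theory Defs
  imports "HOL-Library.Extended_Nat"
begin

text \<open>A quiver is given by a vertex set V and, for each ordered pair (a,b),
  the set of edges a \<rightarrow> b, namely Ed a b.
  An evolution A_0 \<leftarrow> A_1 \<leftarrow> ... \<leftarrow> A_m is a nonempty list of vertices xs
  (xs!k = A_k, length m = length xs - 1) together with a list es of edges,
  es!k being an edge A_(k+1) \<rightarrow> A_k.\<close>

definition evol :: "'v set \<Rightarrow> ('v \<Rightarrow> 'v \<Rightarrow> 'e set) \<Rightarrow> 'v list \<Rightarrow> 'e list \<Rightarrow> bool" where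
  "evol V Ed xs es \<longleftrightarrow> xs \<noteq> [] \<and> set xs \<subseteq> V \<and> length es = length xs - 1 \<and>
     (\<forall>k < length es. es ! k \<in> Ed (xs ! (k+1)) (xs ! k))"

definition anc :: "'v set \<Rightarrow> ('v \<Rightarrow> 'v \<Rightarrow> 'e set) \<Rightarrow> 'v \<Rightarrow> 'v \<Rightarrow> bool" where
  "anc V Ed a b \<longleftrightarrow> (\<exists>xs es. evol V Ed xs es \<and> hd xs = a \<and> last xs = b)"

definition isotypic :: "'v set \<Rightarrow> ('v \<Rightarrow> 'v \<Rightarrow> 'e set) \<Rightarrow> 'v \<Rightarrow> 'v \<Rightarrow> bool" where
  "isotypic V Ed a b \<longleftrightarrow> anc V Ed a b \<and> anc V Ed b a"

definition primitive :: "'v set \<Rightarrow> ('v \<Rightarrow> 'v \<Rightarrow> 'e set) \<Rightarrow> 'v \<Rightarrow> bool" where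
  "primitive V Ed a \<longleftrightarrow> a \<in> V \<and> (\<forall>b. anc V Ed b a \<longrightarrow> isotypic V Ed b a)"

definition full_evol :: "'v set \<Rightarrow> ('v \<Rightarrow> 'v \<Rightarrow> 'e set) \<Rightarrow> 'v \<Rightarrow> 'v list \<Rightarrow> 'e list \<Rightarrow> bool" where
  "full_evol V Ed x xs es \<longleftrightarrow> evol V Ed xs es \<and> primitive V Ed (hd xs) \<and> last xs = x"

definition height :: "'v set \<Rightarrow> ('v \<Rightarrow> 'v \<Rightarrow> 'e set) \<Rightarrow> 'v \<Rightarrow> enat" where
  "height V Ed x =
     (if \<exists>xs es. full_evol V Ed x xs es
      then enat (LEAST m. \<exists>xs es. full_evol V Ed x xs es \<and> length xs - 1 = m)
      else \<infinity>)"

definition embeds :: "'v set \<Rightarrow> ('v \<Rightarrow> 'v \<Rightarrow> 'e set) \<Rightarrow> 'v list \<Rightarrow> 'v list \<Rightarrow> bool" where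
  "embeds V Ed xs ys \<longleftrightarrow> length xs \<le> length ys \<and>
     (\<exists>r. strict_mono_on {..<length xs} r \<and>
          (\<forall>k < length xs. r k < length ys \<and> isotypic V Ed (xs ! k) (ys ! (r k))))"

definition universal_evol :: "'v set \<Rightarrow> ('v \<Rightarrow> 'v \<Rightarrow> 'e set) \<Rightarrow> 'v \<Rightarrow> 'v list \<Rightarrow> 'e list \<Rightarrow> bool" where
  "universal_evol V Ed x xs es \<longleftrightarrow> full_evol V Ed x xs es \<and>
     (\<forall>ys fs. full_evol V Ed x ys fs \<longrightarrow> embeds V Ed xs ys)"

definition phylogenetic_vertex :: "'v set \<Rightarrow> ('v \<Rightarrow> 'v \<Rightarrow> 'e set) \<Rightarrow> 'v \<Rightarrow> bool" where
  "phylogenetic_vertex V Ed x \<longleftrightarrow> (\<exists>xs es. universal_evol V Ed x xs es)"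

definition monotonous :: "'v set \<Rightarrow> ('v \<Rightarrow> 'v \<Rightarrow> 'e set) \<Rightarrow> bool" where
  "monotonous V Ed \<longleftrightarrow> (\<forall>a\<in>V. \<forall>b\<in>V. Ed a b \<noteq> {} \<longrightarrow> height V Ed a \<ge> height V Ed b)"

text \<open>Smallness (isotypy classes form a set) holds automatically in HOL.\<close>
definition phylogenetic_quiver :: "'v set \<Rightarrow> ('v \<Rightarrow> 'v \<Rightarrow> 'e set) \<Rightarrow> bool" where
  "phylogenetic_quiver V Ed \<longleftrightarrow> monotonous V Ed \<and> (\<forall>x\<in>V. phylogenetic_vertex V Ed x)"

definition clade_V :: "'v set \<Rightarrow> ('v \<Rightarrow> 'v \<Rightarrow> 'e set) \<Rightarrow> 'v \<Rightarrow> 'v set" where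
  "clade_V V Ed a = {b. anc V Ed a b}"

definition clade_E :: "'v set \<Rightarrow> ('v \<Rightarrow> 'v \<Rightarrow> 'e set) \<Rightarrow> 'v \<Rightarrow> 'v \<Rightarrow> 'v \<Rightarrow> 'e set" where
  "clade_E V Ed a x y = (if x \<in> clade_V V Ed a \<and> y \<in> clade_V V Ed a then Ed x y else {})"

definition regular :: "'v set \<Rightarrow> ('v \<Rightarrow> 'v \<Rightarrow> 'e set) \<Rightarrow> 'v \<Rightarrow> bool" where
  "regular V Ed a \<longleftrightarrow> a \<in> V \<and>
     (\<forall>b \<in> clade_V V Ed a. height V Ed b = height V Ed a \<longrightarrow> Ed b a \<noteq> {})"

end

theory Submission
  imports Defs
begin

definition chn :: "'v set \<Rightarrow> ('v \<Rightarrow> 'v \<Rightarrow> 'e set) \<Rightarrow> 'v list \<Rightarrow> bool" where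
  "chn V Ed xs \<longleftrightarrow> xs \<noteq> [] \<and> set xs \<subseteq> V \<and> (\<forall>k. Suc k < length xs \<longrightarrow> Ed (xs!Suc k) (xs!k) \<noteq> {})"

definition fchn :: "'v set \<Rightarrow> ('v \<Rightarrow> 'v \<Rightarrow> 'e set) \<Rightarrow> 'v \<Rightarrow> 'v list \<Rightarrow> bool" where
  "fchn V Ed x xs \<longleftrightarrow> chn V Ed xs \<and> primitive V Ed (hd xs) \<and> last xs = x"

lemma evol_chn: "evol V Ed xs es \<Longrightarrow> chn V Ed xs"
proof -
  assume e: "evol V Ed xs es"
  have "Ed (xs!Suc k) (xs!k) \<noteq> {}" if "Suc k < length xs" for k
  proof -
    have "k < length es" using e that unfolding evol_def by simp
    then have "es!k \<in> Ed (xs!(k+1)) (xs!k)" using e unfolding evol_def by blast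
    then show ?thesis by auto
  qed
  then show ?thesis using e unfolding evol_def chn_def by blast
qed

lemma chn_evol: "chn V Ed xs \<Longrightarrow> \<exists>es. evol V Ed xs es"
proof -
  assume c: "chn V Ed xs"
  define es where "es = map (\<lambda>k. SOME e. e \<in> Ed (xs!Suc k) (xs!k)) [0..<length xs - 1]"
  have len: "length es = length xs - 1" unfolding es_def by simp
  have "es ! k \<in> Ed (xs!(k+1)) (xs!k)" if "k < length es" for k
  proof -
    have "Suc k < length xs" using that len by simp
    then have ne: "Ed (xs!Suc k) (xs!k) \<noteq> {}" using c unfolding chn_def by blast
    have "es ! k = (SOME e. e \<in> Ed (xs!Suc k) (xs!k))" using that len unfolding es_def by simp
    then show ?thesis using ne some_in_eq by (metis Suc_eq_plus1)
  qed
  then have "evol V Ed xs es" unfolding evol_def using c len unfolding chn_def by blast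
  thus ?thesis by blast
qed

lemma anc_chn: "anc V Ed a b \<longleftrightarrow> (\<exists>xs. chn V Ed xs \<and> hd xs = a \<and> last xs = b)"
  unfolding anc_def using evol_chn chn_evol by blast

lemma full_fchn: "(\<exists>es. full_evol V Ed x xs es) \<longleftrightarrow> fchn V Ed x xs"
  unfolding full_evol_def fchn_def using evol_chn chn_evol by blast

lemma height_alt: "height V Ed x = (if \<exists>xs. fchn V Ed x xs
      then enat (LEAST m. \<exists>xs. fchn V Ed x xs \<and> length xs - 1 = m) else \<infinity>)"
  unfolding height_def by (simp add: full_fchn[symmetric])

lemma phylo_alt: "phylogenetic_vertex V Ed x \<longleftrightarrow>
   (\<exists>xs. fchn V Ed x xs \<and> (\<forall>ys. fchn V Ed x ys \<longrightarrow> embeds V Ed xs ys))"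
proof
  assume "phylogenetic_vertex V Ed x"
  then obtain xs es where "universal_evol V Ed x xs es" unfolding phylogenetic_vertex_def by blast
  then have "full_evol V Ed x xs es" "\<forall>ys fs. full_evol V Ed x ys fs \<longrightarrow> embeds V Ed xs ys"
    unfolding universal_evol_def by auto
  then show "\<exists>xs. fchn V Ed x xs \<and> (\<forall>ys. fchn V Ed x ys \<longrightarrow> embeds V Ed xs ys)"
    using full_fchn by metis
next
  assume "\<exists>xs. fchn V Ed x xs \<and> (\<forall>ys. fchn V Ed x ys \<longrightarrow> embeds V Ed xs ys)"
  then obtain xs where a: "fchn V Ed x xs" "\<forall>ys. fchn V Ed x ys \<longrightarrow> embeds V Ed xs ys" by blast
  then obtain es where "full_evol V Ed x xs es" using full_fchn by metis
  moreover have "\<forall>ys fs. full_evol V Ed x ys fs \<longrightarrow> embeds V Ed xs ys" using a full_fchn by metis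
  ultimately show "phylogenetic_vertex V Ed x" unfolding phylogenetic_vertex_def universal_evol_def by blast
qed

lemma chn_drop: "chn V Ed xs \<Longrightarrow> k < length xs \<Longrightarrow> chn V Ed (drop k xs)"
  unfolding chn_def by (auto dest: in_set_dropD)

lemma chn_take: "chn V Ed xs \<Longrightarrow> 0 < k \<Longrightarrow> chn V Ed (take k xs)"
  unfolding chn_def by (auto dest: in_set_takeD)

lemma chn_Cons: "chn V Ed xs \<Longrightarrow> a \<in> V \<Longrightarrow> Ed (hd xs) a \<noteq> {} \<Longrightarrow> chn V Ed (a # xs)"
proof -
  assume c: "chn V Ed xs" and a: "a \<in> V" and e: "Ed (hd xs) a \<noteq> {}"
  have ne: "xs \<noteq> []" using c unfolding chn_def by simp
  have "Ed ((a#xs)!Suc k) ((a#xs)!k) \<noteq> {}" if k: "Suc k < length (a#xs)" for k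
  proof (cases k)
    case 0
    then show ?thesis using e ne by (simp add: hd_conv_nth)
  next
    case (Suc j)
    then have "Suc j < length xs" using k by simp
    then have "Ed (xs!Suc j) (xs!j) \<noteq> {}" using c unfolding chn_def by blast
    then show ?thesis using Suc by simp
  qed
  moreover have "set (a#xs) \<subseteq> V" using c a unfolding chn_def by simp
  ultimately show ?thesis unfolding chn_def by blast
qed

lemma chn_snoc: "chn V Ed xs \<Longrightarrow> y \<in> V \<Longrightarrow> Ed y (last xs) \<noteq> {} \<Longrightarrow> chn V Ed (xs @ [y])"
proof -
  assume c: "chn V Ed xs" and a: "y \<in> V" and e: "Ed y (last xs) \<noteq> {}"
  have ne: "xs \<noteq> []" using c unfolding chn_def by simp
  have "Ed ((xs@[y])!Suc k) ((xs@[y])!k) \<noteq> {}" if k: "Suc k < length (xs@[y])" for k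
  proof (cases "Suc k < length xs")
    case True
    then have "Ed (xs!Suc k) (xs!k) \<noteq> {}" using c unfolding chn_def by blast
    then show ?thesis using True by (simp add: nth_append)
  next
    case False
    then have sk: "Suc k = length xs" using k by simp
    have k1: "k = length xs - 1" using sk by simp
    have "(xs@[y])!k = last xs" using k1 ne by (simp add: nth_append last_conv_nth)
    moreover have "(xs@[y])!Suc k = y" using sk by simp
    ultimately show ?thesis using e by simp
  qed
  moreover have "set (xs@[y]) \<subseteq> V" using c a unfolding chn_def by simp
  ultimately show ?thesis unfolding chn_def by blast
qed

lemma hd_bl_app: "xs \<noteq> [] \<Longrightarrow> last xs = hd ys \<Longrightarrow> hd (butlast xs @ ys) = hd xs"
  by (cases xs rule: rev_cases) (auto simp: hd_append)

lemma chn_append: "chn V Ed xs \<Longrightarrow> chn V Ed ys \<Longrightarrow> last xs = hd ys \<Longrightarrow> chn V Ed (butlast xs @ ys)"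
proof (induction xs)
  case Nil
  then show ?case by (simp add: chn_def)
next
  case (Cons x xs)
  show ?case
  proof (cases "xs = []")
    case True
    then show ?thesis using Cons.prems(2) by simp
  next
    case False
    have c: "chn V Ed xs" using chn_drop[OF Cons.prems(1), of 1] False by simp
    have ih: "chn V Ed (butlast xs @ ys)" using Cons.IH[OF c Cons.prems(2)] Cons.prems(3) False by simp
    have lxs: "last xs = hd ys" using Cons.prems(3) False by simp
    have hd: "hd (butlast xs @ ys) = hd xs" using hd_bl_app[OF False lxs] .
    have "Ed (hd xs) x \<noteq> {}" "x \<in> V" using Cons.prems(1) False unfolding chn_def
      by (auto simp: hd_conv_nth)
    then have "chn V Ed (x # (butlast xs @ ys))" using chn_Cons[OF ih] hd by simp
    then show ?thesis using False by simp
  qed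
qed

lemma chn_anc: "chn V Ed xs \<Longrightarrow> i \<le> j \<Longrightarrow> j < length xs \<Longrightarrow> anc V Ed (xs!i) (xs!j)"
proof -
  assume c: "chn V Ed xs" "i \<le> j" "j < length xs"
  let ?ys = "take (j - i + 1) (drop i xs)"
  have 1: "chn V Ed ?ys" using c by (intro chn_take chn_drop) auto
  have 2: "hd ?ys = xs!i" using c by (simp add: hd_drop_conv_nth)
  have len: "length ?ys = j - i + 1" using c by simp
  have nj: "?ys ! (j - i) = xs!j" using c by simp
  have "?ys \<noteq> []" using 1 unfolding chn_def by simp
  then have "last ?ys = ?ys ! (j - i)" using len by (simp add: last_conv_nth)
  then have 3: "last ?ys = xs!j" using nj by simp
  from 1 2 3 have "\<exists>xs'. chn V Ed xs' \<and> hd xs' = xs!i \<and> last xs' = xs!j" by blast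
  then show ?thesis unfolding anc_chn .
qed

lemma anc_refl: "a \<in> V \<Longrightarrow> anc V Ed a a"
  unfolding anc_chn by (rule exI[of _ "[a]"]) (simp add: chn_def)

lemma anc_V: "anc V Ed a b \<Longrightarrow> a \<in> V \<and> b \<in> V"
  unfolding anc_chn chn_def by auto

lemma anc_trans: "anc V Ed a b \<Longrightarrow> anc V Ed b c \<Longrightarrow> anc V Ed a c"
proof -
  assume "anc V Ed a b" "anc V Ed b c"
  then obtain xs ys where x: "chn V Ed xs" "hd xs = a" "last xs = b"
    and y: "chn V Ed ys" "hd ys = b" "last ys = c" unfolding anc_chn by blast
  have xne: "xs \<noteq> []" using x(1) unfolding chn_def by simp
  have "chn V Ed (butlast xs @ ys)" using chn_append[OF x(1) y(1)] x(3) y(2) by simp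
  moreover have "hd (butlast xs @ ys) = a" using hd_bl_app[OF xne] x(2,3) y(2) by simp
  moreover have "last (butlast xs @ ys) = c" using y unfolding chn_def by simp
  ultimately show ?thesis unfolding anc_chn by blast
qed

lemma iso_sym: "isotypic V Ed a b \<Longrightarrow> isotypic V Ed b a"
  unfolding isotypic_def by blast
lemma iso_trans: "isotypic V Ed a b \<Longrightarrow> isotypic V Ed b c \<Longrightarrow> isotypic V Ed a c"
  unfolding isotypic_def by (meson anc_trans)

lemma smo_iff: "strict_mono_on {..<(n::nat)} (t::nat \<Rightarrow> nat) \<longleftrightarrow> (\<forall>i j. i < j \<longrightarrow> j < n \<longrightarrow> t i < t j)"
  unfolding strict_mono_on_def lessThan_iff
proof (intro iffI allI impI)
  fix i j assume h: "\<forall>r s. r < n \<and> s < n \<and> r < s \<longrightarrow> t r < t s" and ij: "i < j" "j < n"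
  have "i < n" using ij by simp
  then show "t i < t j" using h ij by blast
next
  fix r s assume h: "\<forall>i j. i < j \<longrightarrow> j < n \<longrightarrow> t i < t j" and rs: "r < n \<and> s < n \<and> r < s"
  then show "t r < t s" by blast
qed

lemma smono_ge: "(\<forall>i j. i < j \<longrightarrow> j < n \<longrightarrow> t i < (t j::nat)) \<Longrightarrow> k < n \<Longrightarrow> k \<le> t k"
proof (induction k)
  case 0 then show ?case by simp
next
  case (Suc k)
  then have "k \<le> t k" by simp
  moreover have "t k < t (Suc k)" using Suc.prems by auto
  ultimately show ?case by simp
qed

lemma smono_len: "(\<forall>i j. i < j \<longrightarrow> j < n \<longrightarrow> t i < (t j::nat)) \<Longrightarrow> (\<forall>k<n. t k < L) \<Longrightarrow> n \<le> L"
proof (cases n)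
  case (Suc p)
  assume a: "\<forall>i j. i < j \<longrightarrow> j < n \<longrightarrow> t i < (t j::nat)" "\<forall>k<n. t k < L"
  have "p \<le> t p" using smono_ge[OF a(1)] Suc by simp
  moreover have "t p < L" using a(2) Suc by simp
  ultimately show ?thesis using Suc by simp
qed simp

lemma fchn_height: "fchn V Ed x xs \<Longrightarrow> height V Ed x \<le> enat (length xs - 1)"
  unfolding height_alt by (auto intro: Least_le)

lemma height_obtain: "height V Ed x = enat n \<Longrightarrow> \<exists>xs. fchn V Ed x xs \<and> length xs - 1 = n"
proof -
  assume h: "height V Ed x = enat n"
  then have ex: "\<exists>xs. fchn V Ed x xs" unfolding height_alt by (auto split: if_splits)
  then have n: "n = (LEAST m. \<exists>xs. fchn V Ed x xs \<and> length xs - 1 = m)" using h unfolding height_alt by simp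
  have "\<exists>m xs. fchn V Ed x xs \<and> length xs - 1 = m" using ex by blast
  from LeastI_ex[OF this] show ?thesis unfolding n[symmetric] .
qed

lemma univ_height: "fchn V Ed x xs \<Longrightarrow> \<forall>ys. fchn V Ed x ys \<longrightarrow> embeds V Ed xs ys \<Longrightarrow>
    height V Ed x = enat (length xs - 1)"
proof -
  assume f: "fchn V Ed x xs" and u: "\<forall>ys. fchn V Ed x ys \<longrightarrow> embeds V Ed xs ys"
  have le: "height V Ed x \<le> enat (length xs - 1)" using fchn_height[OF f] .
  then obtain n where n: "height V Ed x = enat n" "n \<le> length xs - 1"
    by (cases "height V Ed x") auto
  obtain ys where ys: "fchn V Ed x ys" "length ys - 1 = n" using height_obtain[OF n(1)] by blast
  have "length xs \<le> length ys" using u ys(1) unfolding embeds_def by blast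
  then have "length xs - 1 \<le> n" using ys(2) by simp
  then show ?thesis using n by simp
qed

lemma mono_chn: "monotonous V Ed \<Longrightarrow> chn V Ed xs \<Longrightarrow> k < length xs \<Longrightarrow> height V Ed (xs!0) \<le> height V Ed (xs!k)"
proof (induction k)
  case 0 then show ?case by simp
next
  case (Suc k)
  have "Ed (xs!Suc k) (xs!k) \<noteq> {}" "xs!Suc k \<in> V" "xs!k \<in> V" using Suc.prems unfolding chn_def
    by (auto simp: subset_iff)
  then have "height V Ed (xs!k) \<le> height V Ed (xs!Suc k)" using Suc.prems(1) unfolding monotonous_def by blast
  with Suc show ?case by (meson Suc_lessD order_trans)
qed

lemma mono_anc: "monotonous V Ed \<Longrightarrow> anc V Ed a b \<Longrightarrow> height V Ed a \<le> height V Ed b"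
proof -
  assume m: "monotonous V Ed" and "anc V Ed a b"
  then obtain xs where x: "chn V Ed xs" "hd xs = a" "last xs = b" unfolding anc_chn by blast
  then have "xs \<noteq> []" unfolding chn_def by simp
  then show ?thesis using mono_chn[OF m x(1), of "length xs - 1"] x by (simp add: hd_conv_nth last_conv_nth)
qed

lemma iso_height: "monotonous V Ed \<Longrightarrow> isotypic V Ed a b \<Longrightarrow> height V Ed a = height V Ed b"
  unfolding isotypic_def by (meson mono_anc order_antisym)

lemma embed_shift:
  assumes U: "\<forall>ys. fchn V Ed x ys \<longrightarrow> embeds V Ed U ys"
    and Q: "fchn V Ed (hd F) Q" and F: "chn V Ed F" "last F = x"
    and a: "a = length Q - 1"
  shows "\<exists>s. (\<forall>k. a \<le> k \<longrightarrow> k < length U \<longrightarrow> s k < length F \<and> isotypic V Ed (U!k) (F!(s k))) \<and>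
             (\<forall>i j. a \<le> i \<longrightarrow> i < j \<longrightarrow> j < length U \<longrightarrow> s i < s j)"
proof -
  define G where "G = butlast Q @ F"
  have Qc: "chn V Ed Q" "primitive V Ed (hd Q)" "last Q = hd F" using Q unfolding fchn_def by auto
  have Qne: "Q \<noteq> []" using Qc unfolding chn_def by simp
  have Fne: "F \<noteq> []" using F unfolding chn_def by simp
  have lenb: "length (butlast Q) = a" using a by simp
  have G1: "chn V Ed G" unfolding G_def using chn_append[OF Qc(1) F(1) Qc(3)] .
  have G2: "hd G = hd Q" unfolding G_def using hd_bl_app Qne Qc(3) by blast
  have G3: "last G = x" unfolding G_def using Fne F(2) by simp
  have "fchn V Ed x G" using G1 G2 G3 Qc(2) unfolding fchn_def by simp
  then obtain r where r: "strict_mono_on {..<length U} r"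
      "\<forall>k<length U. r k < length G \<and> isotypic V Ed (U!k) (G!(r k))"
    using U unfolding embeds_def by blast
  have rr: "\<forall>i j. i < j \<longrightarrow> j < length U \<longrightarrow> r i < r j" using r(1) unfolding smo_iff .
  have ge: "k < length U \<Longrightarrow> k \<le> r k" for k using smono_ge[OF rr] .
  have lenG: "length G = a + length F" unfolding G_def using lenb by simp
  define s where "s k = r k - a" for k
  show ?thesis
  proof (intro exI[of _ s] conjI allI impI)
    fix k assume k: "a \<le> k" "k < length U"
    have ark: "a \<le> r k" using ge[OF k(2)] k(1) by simp
    then have "G!(r k) = F!(s k)" unfolding G_def s_def using lenb by (simp add: nth_append)
    moreover have "r k < length G" "isotypic V Ed (U!k) (G!(r k))" using r(2) k by auto
    ultimately show "s k < length F" "isotypic V Ed (U!k) (F!(s k))" using ark lenG unfolding s_def by auto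
  next
    fix i j assume ij: "a \<le> i" "i < j" "j < length U"
    have "r i < r j" using rr ij by blast
    moreover have "a \<le> r i" using ge[of i] ij by simp
    ultimately show "s i < s j" unfolding s_def by simp
  qed
qed

context
  fixes V :: "'v set" and Ed :: "'v \<Rightarrow> 'v \<Rightarrow> 'e set" and A :: 'v
  assumes AV: "A \<in> V"
begin

lemma C_V: "x \<in> clade_V V Ed A \<Longrightarrow> x \<in> V \<and> anc V Ed A x"
  unfolding clade_V_def by (auto dest: anc_V)

lemma A_C: "A \<in> clade_V V Ed A"
  using anc_refl[OF AV] unfolding clade_V_def by simp

lemma desc_C: "x \<in> clade_V V Ed A \<Longrightarrow> anc V Ed x y \<Longrightarrow> y \<in> clade_V V Ed A"
  using anc_trans[of V Ed A x y] unfolding clade_V_def by simp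

lemma chn_C_set: "chn V Ed xs \<Longrightarrow> hd xs \<in> clade_V V Ed A \<Longrightarrow> set xs \<subseteq> clade_V V Ed A"
proof
  fix y assume c: "chn V Ed xs" "hd xs \<in> clade_V V Ed A" "y \<in> set xs"
  then obtain k where k: "k < length xs" "y = xs!k" by (metis in_set_conv_nth)
  have "anc V Ed (xs!0) (xs!k)" using chn_anc[OF c(1)] k by simp
  moreover have "xs!0 = hd xs" using c(1) unfolding chn_def by (simp add: hd_conv_nth)
  ultimately have "anc V Ed (hd xs) y" using k(2) by simp
  then show "y \<in> clade_V V Ed A" using desc_C[OF c(2)] by simp
qed

lemma chn_clade: "chn (clade_V V Ed A) (clade_E V Ed A) xs \<longleftrightarrow> chn V Ed xs \<and> set xs \<subseteq> clade_V V Ed A"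
proof (cases "set xs \<subseteq> clade_V V Ed A")
  case True
  have CV: "clade_V V Ed A \<subseteq> V" using C_V by blast
  have eq: "\<And>k. Suc k < length xs \<Longrightarrow> clade_E V Ed A (xs!Suc k) (xs!k) = Ed (xs!Suc k) (xs!k)"
    unfolding clade_E_def using True by (metis Suc_lessD nth_mem subsetD)
  have "set xs \<subseteq> V" using True CV by blast
  then show ?thesis unfolding chn_def using True eq by auto
next
  case False
  then show ?thesis unfolding chn_def by auto
qed

lemma anc_clade: "anc (clade_V V Ed A) (clade_E V Ed A) x y \<longleftrightarrow> x \<in> clade_V V Ed A \<and> anc V Ed x y"
proof
  assume "anc (clade_V V Ed A) (clade_E V Ed A) x y"
  then obtain xs where xs0: "chn (clade_V V Ed A) (clade_E V Ed A) xs" "hd xs = x" "last xs = y"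
    unfolding anc_chn by blast
  then have xs: "chn V Ed xs" "set xs \<subseteq> clade_V V Ed A" unfolding chn_clade by auto
  then have "x \<in> clade_V V Ed A" using xs0(2) hd_in_set unfolding chn_def by blast
  moreover have "anc V Ed x y" unfolding anc_chn using xs(1) xs0(2,3) by blast
  ultimately show "x \<in> clade_V V Ed A \<and> anc V Ed x y" by simp
next
  assume a: "x \<in> clade_V V Ed A \<and> anc V Ed x y"
  then obtain xs where xs: "chn V Ed xs" "hd xs = x" "last xs = y" unfolding anc_chn by blast
  then have "set xs \<subseteq> clade_V V Ed A" using chn_C_set a by blast
  then have "chn (clade_V V Ed A) (clade_E V Ed A) xs" unfolding chn_clade using xs(1) by simp
  then show "anc (clade_V V Ed A) (clade_E V Ed A) x y" using xs(2,3) unfolding anc_chn by blast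
qed

lemma iso_clade: "isotypic (clade_V V Ed A) (clade_E V Ed A) x y \<longleftrightarrow> x \<in> clade_V V Ed A \<and> isotypic V Ed x y"
  unfolding isotypic_def anc_clade using desc_C by auto

lemma iso_refl: "x \<in> V \<Longrightarrow> isotypic V Ed x x"
  using anc_refl[of x V Ed] unfolding isotypic_def by simp

lemma prim_clade: "primitive (clade_V V Ed A) (clade_E V Ed A) x \<longleftrightarrow> x \<in> clade_V V Ed A \<and> isotypic V Ed x A"
proof
  assume p: "primitive (clade_V V Ed A) (clade_E V Ed A) x"
  then have xC: "x \<in> clade_V V Ed A" unfolding primitive_def by blast
  have "anc V Ed A x" using C_V[OF xC] by simp
  then have "anc (clade_V V Ed A) (clade_E V Ed A) A x" unfolding anc_clade using A_C by simp
  then have "isotypic (clade_V V Ed A) (clade_E V Ed A) A x" using p unfolding primitive_def by blast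
  then have "isotypic V Ed A x" unfolding iso_clade by simp
  then have "isotypic V Ed x A" by (rule iso_sym)
  then show "x \<in> clade_V V Ed A \<and> isotypic V Ed x A" using xC by blast
next
  assume a: "x \<in> clade_V V Ed A \<and> isotypic V Ed x A"
  have "isotypic (clade_V V Ed A) (clade_E V Ed A) b x" if "anc (clade_V V Ed A) (clade_E V Ed A) b x" for b
  proof -
    have b: "b \<in> clade_V V Ed A" "anc V Ed b x" using that unfolding anc_clade by auto
    have "anc V Ed x A" using a unfolding isotypic_def by simp
    moreover have "anc V Ed A b" using C_V[OF b(1)] by simp
    ultimately have "anc V Ed x b" by (rule anc_trans)
    then have "isotypic V Ed b x" using b(2) unfolding isotypic_def by simp
    then show ?thesis unfolding iso_clade using b(1) by simp
  qed
  then show "primitive (clade_V V Ed A) (clade_E V Ed A) x" using a unfolding primitive_def by blast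
qed

lemma embeds_clade: "set xs \<subseteq> clade_V V Ed A \<Longrightarrow>
   embeds (clade_V V Ed A) (clade_E V Ed A) xs ys \<longleftrightarrow> embeds V Ed xs ys"
proof -
  assume s: "set xs \<subseteq> clade_V V Ed A"
  have e: "\<And>k z. k < length xs \<Longrightarrow> isotypic (clade_V V Ed A) (clade_E V Ed A) (xs!k) z \<longleftrightarrow> isotypic V Ed (xs!k) z"
  proof -
    fix k z assume "k < length xs"
    then have "xs!k \<in> clade_V V Ed A" using s nth_mem by blast
    then show "isotypic (clade_V V Ed A) (clade_E V Ed A) (xs!k) z \<longleftrightarrow> isotypic V Ed (xs!k) z"
      unfolding iso_clade by simp
  qed
  show ?thesis unfolding embeds_def by (simp add: e)
qed

lemma fchn_clade: "fchn (clade_V V Ed A) (clade_E V Ed A) x xs \<longleftrightarrow>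
   chn V Ed xs \<and> set xs \<subseteq> clade_V V Ed A \<and> isotypic V Ed (hd xs) A \<and> last xs = x"
proof -
  have "chn V Ed xs \<Longrightarrow> set xs \<subseteq> clade_V V Ed A \<Longrightarrow> hd xs \<in> clade_V V Ed A"
    unfolding chn_def by (meson hd_in_set subsetD)
  then show ?thesis unfolding fchn_def chn_clade prim_clade by auto
qed

end

context
  fixes V :: "'v set" and Ed :: "'v \<Rightarrow> 'v \<Rightarrow> 'e set" and A :: 'v
  assumes phq: "phylogenetic_quiver V Ed" and reg: "regular V Ed A"
begin

lemma AV': "A \<in> V" using reg unfolding regular_def by blast

lemma mon: "monotonous V Ed" using phq unfolding phylogenetic_quiver_def by blast

lemma univ_ex: "x \<in> V \<Longrightarrow> \<exists>U. fchn V Ed x U \<and> (\<forall>ys. fchn V Ed x ys \<longrightarrow> embeds V Ed U ys)"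
proof -
  assume "x \<in> V"
  then have "phylogenetic_vertex V Ed x" using phq unfolding phylogenetic_quiver_def by blast
  then show ?thesis unfolding phylo_alt .
qed

lemma hA: "\<exists>a. height V Ed A = enat a"
proof -
  obtain U where "fchn V Ed A U" "\<forall>ys. fchn V Ed A ys \<longrightarrow> embeds V Ed U ys" using univ_ex[OF AV'] by blast
  then have "height V Ed A = enat (length U - 1)" by (rule univ_height)
  then show ?thesis by blast
qed

lemma Wlem:
  assumes X: "X \<in> clade_V V Ed A"
    and U: "fchn V Ed X U" "\<forall>ys. fchn V Ed X ys \<longrightarrow> embeds V Ed U ys"
    and a: "height V Ed A = enat a"
  shows "a < length U \<and> U!a \<in> clade_V V Ed A \<and>
    (\<exists>W. fchn (clade_V V Ed A) (clade_E V Ed A) X W \<and>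
         (\<forall>F. fchn (clade_V V Ed A) (clade_E V Ed A) X F \<longrightarrow> embeds (clade_V V Ed A) (clade_E V Ed A) W F) \<and>
         length W = length U - a + (if isotypic V Ed (U!a) A then 0 else 1))"
proof -
  note AV = AV'
  have XV: "X \<in> V" "anc V Ed A X" using C_V[OF AV X] by auto
  have hX: "height V Ed X = enat (length U - 1)" using U by (rule univ_height)
  have "height V Ed A \<le> height V Ed X" using mono_anc[OF mon XV(2)] .
  then have aleq: "a \<le> length U - 1" using a hX by simp
  have Une: "U \<noteq> []" using U(1) unfolding fchn_def chn_def by simp
  then have "0 < length U" by simp
  then have alt: "a < length U" using aleq by linarith
  have shift: "\<exists>s. (\<forall>k. a \<le> k \<longrightarrow> k < length U \<longrightarrow> s k < length F \<and> isotypic V Ed (U!k) (F!(s k))) \<and>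
             (\<forall>i j. a \<le> i \<longrightarrow> i < j \<longrightarrow> j < length U \<longrightarrow> s i < s j)"
    if F: "fchn (clade_V V Ed A) (clade_E V Ed A) X F" for F
  proof -
    have Fc: "chn V Ed F" "set F \<subseteq> clade_V V Ed A" "isotypic V Ed (hd F) A" "last F = X"
      using F unfolding fchn_clade[OF AV] by auto
    have hF: "height V Ed (hd F) = enat a" using iso_height[OF mon Fc(3)] a by simp
    obtain Q where Q: "fchn V Ed (hd F) Q" "length Q - 1 = a" using height_obtain[OF hF] by blast
    show ?thesis using embed_shift[OF U(2) Q(1) Fc(1) Fc(4) Q(2)[symmetric]] .
  qed
  obtain P where P: "chn V Ed P" "hd P = A" "last P = X" using XV(2) unfolding anc_chn by blast
  have PC: "set P \<subseteq> clade_V V Ed A" using chn_C_set[OF AV P(1)] P(2) A_C[OF AV, of Ed] by simp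
  have "fchn (clade_V V Ed A) (clade_E V Ed A) X P"
    unfolding fchn_clade[OF AV] using P PC iso_refl[OF AV AV, of Ed] by simp
  then obtain s where s: "\<forall>k. a \<le> k \<longrightarrow> k < length U \<longrightarrow> s k < length P \<and> isotypic V Ed (U!k) (P!(s k))"
    using shift by blast
  have is1: "isotypic V Ed (U!a) (P!(s a))" "s a < length P" using s alt by auto
  have "P!(s a) \<in> clade_V V Ed A" using PC is1(2) nth_mem by blast
  then have UaC: "U!a \<in> clade_V V Ed A" using desc_C[OF AV] is1(1) unfolding isotypic_def by blast
  have Ucomp: "chn V Ed U" "primitive V Ed (hd U)" "last U = X" using U(1) unfolding fchn_def by auto
  have lt: "last (take (Suc a) U) = U!a"
  proof -
    have ne: "take (Suc a) U \<noteq> []" using Une by simp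
    have "length (take (Suc a) U) = Suc a" using alt by simp
    then show ?thesis using ne alt by (simp add: last_conv_nth)
  qed
  have "fchn V Ed (U!a) (take (Suc a) U)"
    unfolding fchn_def using chn_take[OF Ucomp(1), of "Suc a"] Ucomp(2) Une lt by simp
  then have "height V Ed (U!a) \<le> enat (length (take (Suc a) U) - 1)" by (rule fchn_height)
  then have "height V Ed (U!a) \<le> enat a" using alt by simp
  moreover have "height V Ed A \<le> height V Ed (U!a)" using mono_anc[OF mon] C_V[OF AV UaC] by blast
  ultimately have "height V Ed (U!a) = height V Ed A" using a by simp
  then have edge: "Ed (U!a) A \<noteq> {}" using reg UaC unfolding regular_def by blast
  define D where "D = drop a U"
  have D: "chn V Ed D" "hd D = U!a" "last D = X" "length D = length U - a"
    unfolding D_def using chn_drop[OF Ucomp(1) alt] alt Ucomp(3) by (auto simp: hd_drop_conv_nth)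
  have DC: "set D \<subseteq> clade_V V Ed A" using chn_C_set[OF AV D(1)] D(2) UaC by simp
  have Dnth: "k < length D \<Longrightarrow> D!k = U!(k+a)" for k unfolding D_def using alt by (simp add: add.commute)
  have Dne: "D \<noteq> []" using D(1) unfolding chn_def by simp
  show ?thesis
  proof (cases "isotypic V Ed (U!a) A")
    case True
    have W1: "fchn (clade_V V Ed A) (clade_E V Ed A) X D" unfolding fchn_clade[OF AV] using D DC True by simp
    have W2: "embeds (clade_V V Ed A) (clade_E V Ed A) D F"
      if F: "fchn (clade_V V Ed A) (clade_E V Ed A) X F" for F
    proof -
      obtain s where s: "\<forall>k. a \<le> k \<longrightarrow> k < length U \<longrightarrow> s k < length F \<and> isotypic V Ed (U!k) (F!(s k))"
        "\<forall>i j. a \<le> i \<longrightarrow> i < j \<longrightarrow> j < length U \<longrightarrow> s i < s j" using shift[OF F] by blast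
      define t where "t k = s (k + a)" for k
      have t1: "\<forall>k<length D. t k < length F \<and> isotypic V Ed (D!k) (F!(t k))"
        using s(1) D(4) Dnth unfolding t_def by auto
      have t2: "\<forall>i j. i < j \<longrightarrow> j < length D \<longrightarrow> t i < t j"
        using s(2) D(4) unfolding t_def by auto
      have "length D \<le> length F" using smono_len[OF t2] t1 by blast
      then have "embeds V Ed D F" unfolding embeds_def smo_iff using t1 t2 by blast
      then show ?thesis using embeds_clade[OF AV DC] by blast
    qed
    show ?thesis using alt UaC W1 W2 D(4) True by auto
  next
    case False
    define W where "W = A # D"
    have Wc: "chn V Ed W" unfolding W_def using chn_Cons[OF D(1) AV] D(2) edge by simp
    have WC: "set W \<subseteq> clade_V V Ed A" unfolding W_def using DC A_C[OF AV, of Ed] by simp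
    have W1: "fchn (clade_V V Ed A) (clade_E V Ed A) X W"
      unfolding fchn_clade[OF AV] using Wc WC iso_refl[OF AV AV, of Ed] D(3) Dne unfolding W_def by simp
    have W2: "embeds (clade_V V Ed A) (clade_E V Ed A) W F"
      if F: "fchn (clade_V V Ed A) (clade_E V Ed A) X F" for F
    proof -
      have Fc: "chn V Ed F" "set F \<subseteq> clade_V V Ed A" "isotypic V Ed (hd F) A" "last F = X"
        using F unfolding fchn_clade[OF AV] by auto
      have Fne: "F \<noteq> []" using Fc(1) unfolding chn_def by simp
      obtain s where s: "\<forall>k. a \<le> k \<longrightarrow> k < length U \<longrightarrow> s k < length F \<and> isotypic V Ed (U!k) (F!(s k))"
        "\<forall>i j. a \<le> i \<longrightarrow> i < j \<longrightarrow> j < length U \<longrightarrow> s i < s j" using shift[OF F] by blast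
      have sa: "0 < s a"
      proof (rule ccontr)
        assume "\<not> 0 < s a"
        then have sa0: "s a = 0" by simp
        have "isotypic V Ed (U!a) (F!(s a))" using s(1) alt by blast
        then have ih: "isotypic V Ed (U!a) (hd F)" using sa0 Fne by (simp add: hd_conv_nth)
        show False using False iso_trans[OF ih Fc(3)] by blast
      qed
      have smono: "a \<le> i \<Longrightarrow> i < length U \<Longrightarrow> s a \<le> s i" for i
        using s(2) by (metis le_eq_less_or_eq order.strict_implies_order)
      define t where "t k = (if k = 0 then 0 else s (k - 1 + a))" for k
      have lenW: "length W = length D + 1" unfolding W_def by simp
      have t1: "\<forall>k<length W. t k < length F \<and> isotypic V Ed (W!k) (F!(t k))"
      proof (intro allI impI)
        fix k assume k: "k < length W"
        show "t k < length F \<and> isotypic V Ed (W!k) (F!(t k))"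
        proof (cases k)
          case 0
          then show ?thesis unfolding t_def W_def using Fne iso_sym[OF Fc(3)] by (simp add: hd_conv_nth)
        next
          case (Suc j)
          then have "j < length D" using k lenW by simp
          then show ?thesis unfolding t_def W_def using Suc s(1) D(4) Dnth by auto
        qed
      qed
      have t2: "\<forall>i j. i < j \<longrightarrow> j < length W \<longrightarrow> t i < t j"
      proof (intro allI impI)
        fix i j assume ij: "i < j" "j < length W"
        then have j0: "j \<noteq> 0" by simp
        have jU: "j - 1 + a < length U" using ij lenW D(4) alt by simp
        show "t i < t j"
        proof (cases "i = 0")
          case True
          have "s a \<le> s (j - 1 + a)" using smono[of "j - 1 + a"] jU by simp
          then show ?thesis unfolding t_def using True j0 sa by simp
        next
          case False
          then show ?thesis unfolding t_def using j0 s(2) ij jU by auto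
        qed
      qed
      have "length W \<le> length F" using smono_len[OF t2] t1 by blast
      then have "embeds V Ed W F" unfolding embeds_def smo_iff using t1 t2 by blast
      then show ?thesis using embeds_clade[OF AV WC] by blast
    qed
    show ?thesis using alt UaC W1 W2 D(4) False alt unfolding W_def by auto
  qed
qed

lemma clade_mono: "monotonous (clade_V V Ed A) (clade_E V Ed A)"
  unfolding monotonous_def
proof (intro ballI impI)
  fix X Y assume X: "X \<in> clade_V V Ed A" and Y: "Y \<in> clade_V V Ed A"
    and e: "clade_E V Ed A X Y \<noteq> {}"
  have eXY: "Ed X Y \<noteq> {}" using e X Y unfolding clade_E_def by simp
  have XV: "X \<in> V" "Y \<in> V" using C_V[OF AV' X] C_V[OF AV' Y] by auto
  obtain a where a: "height V Ed A = enat a" using hA by blast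
  obtain UX where UX: "fchn V Ed X UX" "\<forall>ys. fchn V Ed X ys \<longrightarrow> embeds V Ed UX ys"
    using univ_ex[OF XV(1)] by blast
  obtain UY where UY: "fchn V Ed Y UY" "\<forall>ys. fchn V Ed Y ys \<longrightarrow> embeds V Ed UY ys"
    using univ_ex[OF XV(2)] by blast
  have WXe: "a < length UX \<and> UX!a \<in> clade_V V Ed A \<and>
    (\<exists>W. fchn (clade_V V Ed A) (clade_E V Ed A) X W \<and>
         (\<forall>F. fchn (clade_V V Ed A) (clade_E V Ed A) X F \<longrightarrow> embeds (clade_V V Ed A) (clade_E V Ed A) W F) \<and>
         length W = length UX - a + (if isotypic V Ed (UX!a) A then 0 else 1))"
    by (rule Wlem[OF X UX(1) UX(2) a])
  then obtain WX where aX: "a < length UX" and WX: "fchn (clade_V V Ed A) (clade_E V Ed A) X WX"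
      "\<forall>F. fchn (clade_V V Ed A) (clade_E V Ed A) X F \<longrightarrow> embeds (clade_V V Ed A) (clade_E V Ed A) WX F"
      "length WX = length UX - a + (if isotypic V Ed (UX!a) A then 0 else 1)"
    by blast
  have WYe: "a < length UY \<and> UY!a \<in> clade_V V Ed A \<and>
    (\<exists>W. fchn (clade_V V Ed A) (clade_E V Ed A) Y W \<and>
         (\<forall>F. fchn (clade_V V Ed A) (clade_E V Ed A) Y F \<longrightarrow> embeds (clade_V V Ed A) (clade_E V Ed A) W F) \<and>
         length W = length UY - a + (if isotypic V Ed (UY!a) A then 0 else 1))"
    by (rule Wlem[OF Y UY(1) UY(2) a])
  then obtain WY where aY: "a < length UY" "UY!a \<in> clade_V V Ed A" and WY: "fchn (clade_V V Ed A) (clade_E V Ed A) Y WY"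
      "\<forall>F. fchn (clade_V V Ed A) (clade_E V Ed A) Y F \<longrightarrow> embeds (clade_V V Ed A) (clade_E V Ed A) WY F"
      "length WY = length UY - a + (if isotypic V Ed (UY!a) A then 0 else 1)"
    by blast
  have hX': "height (clade_V V Ed A) (clade_E V Ed A) X = enat (length WX - 1)"
    using WX(1,2) by (rule univ_height)
  have hY': "height (clade_V V Ed A) (clade_E V Ed A) Y = enat (length WY - 1)"
    using WY(1,2) by (rule univ_height)
  have hX: "height V Ed X = enat (length UX - 1)" using UX by (rule univ_height)
  have hY: "height V Ed Y = enat (length UY - 1)" using UY by (rule univ_height)
  have "height V Ed Y \<le> height V Ed X" using mon XV eXY unfolding monotonous_def by blast
  then have "length UY - 1 \<le> length UX - 1" using hX hY by simp
  then have le: "length UY \<le> length UX" using aX aY(1) by linarith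
  have key: "length WY \<le> length WX"
  proof (cases "isotypic V Ed (UX!a) A \<and> length UY = length UX")
    case False
    then show ?thesis using WX(3) WY(3) le aX aY(1) by (auto split: if_splits)
  next
    case True
    have UYc: "chn V Ed UY" "primitive V Ed (hd UY)" "last UY = Y" using UY(1) unfolding fchn_def by auto
    have UYne: "UY \<noteq> []" using UYc(1) unfolding chn_def by simp
    define G where "G = UY @ [X]"
    have Gc: "chn V Ed G" unfolding G_def using chn_snoc[OF UYc(1) XV(1)] eXY UYc(3) by simp
    have "hd G = hd UY" unfolding G_def using UYne by simp
    moreover have "last G = X" unfolding G_def by simp
    ultimately have "fchn V Ed X G" using Gc UYc(2) unfolding fchn_def by simp
    then obtain r where r: "strict_mono_on {..<length UX} r"
        "\<forall>k<length UX. r k < length G \<and> isotypic V Ed (UX!k) (G!(r k))"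
      using UX(2) unfolding embeds_def by blast
    have rr: "\<forall>i j. i < j \<longrightarrow> j < length UX \<longrightarrow> r i < r j" using r(1) unfolding smo_iff .
    have ar: "a \<le> r a" using smono_ge[OF rr aX] .
    have rl: "r a < length G" "isotypic V Ed (UX!a) (G!(r a))" using r(2) aX by auto
    have an1: "anc V Ed (G!a) (G!(r a))" using chn_anc[OF Gc ar rl(1)] .
    have "G!a = UY!a" unfolding G_def using aY(1) by (simp add: nth_append)
    then have an2: "anc V Ed (UY!a) (G!(r a))" using an1 by simp
    have t1: "isotypic V Ed (UX!a) A" using True by simp
    have i1: "isotypic V Ed A (UX!a)" using iso_sym[OF t1] .
    have "isotypic V Ed A (G!(r a))" using iso_trans[OF i1 rl(2)] .
    then have an3: "anc V Ed (G!(r a)) A" unfolding isotypic_def by simp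
    have "anc V Ed (UY!a) A" using anc_trans[OF an2 an3] .
    moreover have "anc V Ed A (UY!a)" using C_V[OF AV' aY(2)] by simp
    ultimately have "isotypic V Ed (UY!a) A" unfolding isotypic_def by simp
    then show ?thesis using WX(3) WY(3) True by simp
  qed
  show "height (clade_V V Ed A) (clade_E V Ed A) Y \<le> height (clade_V V Ed A) (clade_E V Ed A) X"
    using hX' hY' key by simp
qed

lemma clade_phylo: "x \<in> clade_V V Ed A \<Longrightarrow> phylogenetic_vertex (clade_V V Ed A) (clade_E V Ed A) x"
proof -
  assume x: "x \<in> clade_V V Ed A"
  have xV: "x \<in> V" using C_V[OF AV' x] by simp
  obtain a where a: "height V Ed A = enat a" using hA by blast
  obtain U where U: "fchn V Ed x U" "\<forall>ys. fchn V Ed x ys \<longrightarrow> embeds V Ed U ys"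
    using univ_ex[OF xV] by blast
  have "a < length U \<and> U!a \<in> clade_V V Ed A \<and>
    (\<exists>W. fchn (clade_V V Ed A) (clade_E V Ed A) x W \<and>
         (\<forall>F. fchn (clade_V V Ed A) (clade_E V Ed A) x F \<longrightarrow> embeds (clade_V V Ed A) (clade_E V Ed A) W F) \<and>
         length W = length U - a + (if isotypic V Ed (U!a) A then 0 else 1))"
    by (rule Wlem[OF x U(1) U(2) a])
  then show ?thesis unfolding phylo_alt by blast
qed

end

theorem theorem9p4:
  fixes V :: "'v set" and Ed :: "'v \<Rightarrow> 'v \<Rightarrow> 'e set" and A :: 'v
  assumes "phylogenetic_quiver V Ed"
    and "regular V Ed A"
  shows "phylogenetic_quiver (clade_V V Ed A) (clade_E V Ed A)"
  unfolding phylogenetic_quiver_def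
  using clade_mono[OF assms] clade_phylo[OF assms] by blast


end
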